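(* Let $\mathcal{A}$ be a finite or countable alphabet, $\mathcal{M}$ a countable set of probability measures on $\mathcal{A}^\infty$, $w:\mathcal{M}\to(0,1]$ a prior with $\sum_\nu w_\nu=1$, $\xi$ the Bayes mixture and $\mu\in\mathcal{M}$. For every $n\in\mathbb{N}$, both $\mathbb{E}_\mu\ln(\mu_{<n}/\xi_{<n})$ and $\mathbb{E}_\mu d_n$ exist and are finite.
   Context: $\mathcal{A}^\infty$ carries the $\sigma$-algebra generated by cylinders $\Gamma_x=\{x\omega\}$; for a measure $\rho$, $\rho(x):=\rho(\Gamma_x)$, $\rho(y|x):=\rho(xy)/\rho(x)$, and $\rho_{<t}(\omega):=\rho(\omega_{<t})$ with $\omega_{<t}=\omega_1\cdots\omega_{t-1}$. Bayes mixture $\xi(A):=\sum_\nu w_\nu\nu(A)$. Natural logs. $d_n(\omega):=\sum_{a\in\mathcal{A}}\mu(a|\omega_{<n})\ln\frac{\mu(a|\omega_{<n})}{\xi(a|\omega_{<n})}$. *)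

theory Defs
  imports "HOL-Probability.Probability"
begin

definition cyl :: "'a list \<Rightarrow> 'a stream set" where
  "cyl x = {\<omega>. stake (length x) \<omega> = x}"

definition cylp :: "'a stream measure \<Rightarrow> 'a list \<Rightarrow> real" where
  "cylp \<rho> x = measure \<rho> (cyl x)"

definition mixp :: "'a stream measure set \<Rightarrow> ('a stream measure \<Rightarrow> real) \<Rightarrow> 'a list \<Rightarrow> real" where
  "mixp M w x = (\<Sum>\<^sub>\<infinity>\<nu>\<in>M. w \<nu> * cylp \<nu> x)"

definition condp :: "('a list \<Rightarrow> real) \<Rightarrow> 'a \<Rightarrow> 'a list \<Rightarrow> real" where
  "condp f a x = f (x @ [a]) / f x"

text \<open>omega_{<n} = omega_1 ... omega_{n-1} (streams are 0-indexed in Isabelle).\<close>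
definition prefix_lt :: "nat \<Rightarrow> 'a stream \<Rightarrow> 'a list" where
  "prefix_lt n \<omega> = stake (n - 1) \<omega>"

definition dn :: "'a stream measure \<Rightarrow> 'a stream measure set \<Rightarrow> ('a stream measure \<Rightarrow> real)
    \<Rightarrow> nat \<Rightarrow> 'a stream \<Rightarrow> real" where
  "dn \<mu> M w n \<omega> = (\<Sum>\<^sub>\<infinity>a\<in>UNIV.
      condp (cylp \<mu>) a (prefix_lt n \<omega>) *
      ln (condp (cylp \<mu>) a (prefix_lt n \<omega>) / condp (mixp M w) a (prefix_lt n \<omega>)))"

end

theory Submission
  imports Defs
begin


lemma core:
  fixes u v r w0 :: real
  assumes u: "0 < u" and v: "0 < v" and r: "0 < r" and w0: "0 < w0" and wuv: "w0 * u \<le> v" and w1: "w0 \<le> 1"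
  shows "\<bar>u * ln ((u / v) * r)\<bar> \<le> u * (- ln w0 + r) + v / r"
proof (cases "1 \<le> (u / v) * r")
  case True
  have pos: "0 < u / v" using u v by simp
  have l1: "ln (u / v) \<le> - ln w0"
  proof -
    have "u / v \<le> 1 / w0" using wuv u v w0 by (simp add: field_simps)
    then have "ln (u / v) \<le> ln (1 / w0)" using pos w0 by simp
    then show ?thesis using w0 by (simp add: ln_div)
  qed
  have l2: "ln r \<le> r" using ln_le_minus_one[OF r] by simp
  have "ln ((u / v) * r) = ln (u / v) + ln r" using pos r u v by (simp only: ln_mult) simp
  then have "ln ((u / v) * r) \<le> - ln w0 + r" using l1 l2 by simp
  moreover have "0 \<le> ln ((u / v) * r)" using True by simp
  ultimately have "\<bar>u * ln ((u / v) * r)\<bar> \<le> u * (- ln w0 + r)"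
    using u by (simp add: abs_mult mult_left_mono)
  moreover have "0 \<le> v / r" using v r by simp
  ultimately show ?thesis by linarith
next
  case False
  have pos: "0 < (u / v) * r" using u v r by simp
  have "ln ((u / v) * r) < 0" using False pos by simp
  have "- ln ((u / v) * r) = ln (1 / ((u / v) * r))" using pos by (simp add: ln_div)
  also have "\<dots> \<le> 1 / ((u / v) * r) - 1" using u v r by (intro ln_le_minus_one) simp
  finally have h: "- ln ((u / v) * r) \<le> 1 / ((u / v) * r) - 1" .
  have "\<bar>u * ln ((u / v) * r)\<bar> = u * (- ln ((u / v) * r))"
    using \<open>ln ((u / v) * r) < 0\<close> u by (simp add: abs_mult)
  also have "\<dots> \<le> u * (1 / ((u / v) * r) - 1)" using mult_left_mono[OF h less_imp_le[OF u]] by simp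
  also have "\<dots> = v / r - u" using u v r by (simp add: field_simps)
  also have "\<dots> \<le> u * (- ln w0 + r) + v / r"
  proof -
    have "- ln w0 \<ge> 0"
      using w0 w1 by simp
    then have "0 \<le> u * (- ln w0 + r)" using u r by simp
    then show ?thesis using u by linarith
  qed
  finally show ?thesis .
qed




lemma space_ss: "space (stream_space (count_space (UNIV::'a set))) = UNIV"
  by (simp add: space_stream_space)

lemma cyl_sets:
  fixes x :: "'a::countable list"
  assumes "sets \<nu> = sets (stream_space (count_space UNIV))"
  shows "cyl x \<in> sets \<nu>"
proof -
  have "stake (length x) -` {x} \<inter> space (stream_space (count_space UNIV)) \<in> sets (stream_space (count_space (UNIV::'a set)))"
    by (rule measurable_sets[OF measurable_stake]) simp
  moreover have "stake (length x) -` {x} \<inter> space (stream_space (count_space UNIV)) = cyl x"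
    by (auto simp: cyl_def space_ss)
  ultimately show ?thesis using assms by simp
qed

lemma cyl_disj: "length x = length y \<Longrightarrow> x \<noteq> y \<Longrightarrow> cyl x \<inter> cyl y = {}"
  by (auto simp: cyl_def)

lemma cyl_snoc: "cyl (x @ [a]) \<subseteq> cyl x"
proof
  fix \<omega> assume "\<omega> \<in> cyl (x @ [a])"
  then have "stake (Suc (length x)) \<omega> = x @ [a]" by (simp add: cyl_def)
  then have "take (length x) (stake (Suc (length x)) \<omega>) = x" by simp
  moreover have "take (length x) (stake (Suc (length x)) \<omega>) = stake (length x) \<omega>"
    by (simp only: take_stake) simp
  ultimately show "\<omega> \<in> cyl x" by (simp add: cyl_def)
qed

lemma cyl_stake: "\<omega> \<in> cyl (stake k \<omega>)" by (simp add: cyl_def)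

lemma nn_prefix:
  fixes h :: "'a::countable list \<Rightarrow> ennreal"
  assumes S: "sets \<nu> = sets (stream_space (count_space UNIV))"
  shows "(\<integral>\<^sup>+\<omega>. h (stake k \<omega>) \<partial>\<nu>) = (\<integral>\<^sup>+x. h x * emeasure \<nu> (cyl x) \<partial>count_space {x. length x = k})"
proof -
  have eq: "h (stake k \<omega>) = (\<integral>\<^sup>+x. h x * indicator (cyl x) \<omega> \<partial>count_space {x. length x = k})" for \<omega>
    by (subst nn_integral_count_space'[where A="{stake k \<omega>}"]) (auto simp: cyl_def)
  have "(\<integral>\<^sup>+\<omega>. h (stake k \<omega>) \<partial>\<nu>) = (\<integral>\<^sup>+\<omega>. (\<integral>\<^sup>+x. h x * indicator (cyl x) \<omega> \<partial>count_space {x. length x = k}) \<partial>\<nu>)"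
    by (simp add: eq)
  also have "\<dots> = (\<integral>\<^sup>+x. (\<integral>\<^sup>+\<omega>. h x * indicator (cyl x) \<omega> \<partial>\<nu>) \<partial>count_space {x. length x = k})"
  proof (rule nn_integral_count_space_nn_integral)
    show "countable {x::'a list. length x = k}" by (rule countable_subset[OF subset_UNIV]) simp
    fix x :: "'a list"
    have [measurable]: "cyl x \<in> sets \<nu>" by (rule cyl_sets[OF S])
    show "(\<lambda>\<omega>. h x * indicator (cyl x) \<omega>) \<in> borel_measurable \<nu>" by measurable
  qed
  also have "\<dots> = (\<integral>\<^sup>+x. h x * emeasure \<nu> (cyl x) \<partial>count_space {x. length x = k})"
    by (simp add: nn_integral_cmult_indicator cyl_sets[OF S])
  finally show ?thesis .
qed

lemma sum_cyl_le:
  fixes X :: "'a::countable list set"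
  assumes S: "sets \<nu> = sets (stream_space (count_space UNIV))"
    and disj: "\<And>x y. x \<in> X \<Longrightarrow> y \<in> X \<Longrightarrow> x \<noteq> y \<Longrightarrow> cyl x \<inter> cyl y = {}"
    and sub: "\<And>x. x \<in> X \<Longrightarrow> cyl x \<subseteq> C" and C: "C \<in> sets \<nu>"
  shows "(\<integral>\<^sup>+x. emeasure \<nu> (cyl x) \<partial>count_space X) \<le> emeasure \<nu> C"
proof -
  have "(\<integral>\<^sup>+x. emeasure \<nu> (cyl x) \<partial>count_space X) = emeasure \<nu> (\<Union>(cyl ` X))"
    by (rule emeasure_UN_countable[symmetric])
       (auto intro: countable_subset[OF subset_UNIV] simp: cyl_sets[OF S] disjoint_family_on_def disj)
  also have "\<dots> \<le> emeasure \<nu> C"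
    by (rule emeasure_mono) (use sub C in auto)
  finally show ?thesis .
qed

lemma nn_count_infsum:
  fixes f :: "'b \<Rightarrow> real"
  assumes "f summable_on A" "\<And>x. x \<in> A \<Longrightarrow> f x \<ge> 0"
  shows "(\<integral>\<^sup>+x. ennreal (f x) \<partial>count_space A) = ennreal (infsum f A)"
proof -
  have "Infinite_Sum.abs_summable_on f A"
    using assms by (metis (no_types, lifting) real_norm_def abs_of_nonneg summable_on_cong)
  then have a: "Infinite_Set_Sum.abs_summable_on f A" by (rule abs_summable_equivalent[THEN iffD1])
  show ?thesis
    using nn_integral_conv_infsetsum[OF a assms(2)] infsetsum_infsum[OF a] by simp
qed




lemma sum_cyl_le':
  fixes g :: "'i \<Rightarrow> 'a::countable list"
  assumes S: "sets \<nu> = sets (stream_space (count_space UNIV))" and I: "countable I"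
    and disj: "\<And>i j. i \<in> I \<Longrightarrow> j \<in> I \<Longrightarrow> i \<noteq> j \<Longrightarrow> cyl (g i) \<inter> cyl (g j) = {}"
    and sub: "\<And>i. i \<in> I \<Longrightarrow> cyl (g i) \<subseteq> C" and C: "C \<in> sets \<nu>"
  shows "(\<integral>\<^sup>+i. emeasure \<nu> (cyl (g i)) \<partial>count_space I) \<le> emeasure \<nu> C"
proof -
  have "(\<integral>\<^sup>+i. emeasure \<nu> (cyl (g i)) \<partial>count_space I) = emeasure \<nu> (\<Union>i\<in>I. cyl (g i))"
    by (rule emeasure_UN_countable[symmetric])
       (auto simp: I cyl_sets[OF S] disjoint_family_on_def disj)
  also have "\<dots> \<le> emeasure \<nu> C"
    by (rule emeasure_mono) (use sub C in auto)
  finally show ?thesis .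
qed

locale bay =
  fixes M :: "('a::countable) stream measure set"
    and w :: "'a stream measure \<Rightarrow> real"
    and \<mu> :: "'a stream measure"
  assumes cM: "countable M"
    and P: "\<And>\<nu>. \<nu> \<in> M \<Longrightarrow> prob_space \<nu>"
    and S: "\<And>\<nu>. \<nu> \<in> M \<Longrightarrow> sets \<nu> = sets (stream_space (count_space UNIV))"
    and W: "\<And>\<nu>. \<nu> \<in> M \<Longrightarrow> 0 < w \<nu> \<and> w \<nu> \<le> 1"
    and H: "(w has_sum 1) M"
    and mu: "\<mu> \<in> M"
begin

lemma cylp_bounds: "\<nu> \<in> M \<Longrightarrow> 0 \<le> cylp \<nu> x \<and> cylp \<nu> x \<le> 1"
  using prob_space.prob_le_1[OF P] by (simp add: cylp_def)

lemma wc_nn: "\<nu> \<in> M \<Longrightarrow> 0 \<le> w \<nu> * cylp \<nu> x"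
  using cylp_bounds[of \<nu> x] W[of \<nu>] by simp

lemma summ: "(\<lambda>\<nu>. w \<nu> * cylp \<nu> x) summable_on M"
proof (rule summable_on_comparison_test)
  show "w summable_on M" using H by (rule has_sum_imp_summable)
  fix \<nu> assume "\<nu> \<in> M"
  then show "w \<nu> * cylp \<nu> x \<le> w \<nu>" "0 \<le> w \<nu> * cylp \<nu> x"
    using cylp_bounds[of \<nu> x] W[of \<nu>] by (auto simp: mult_left_le)
qed

lemma mix_nn: "0 \<le> mixp M w x"
  unfolding mixp_def using wc_nn by (intro infsum_nonneg) (auto)

lemma mix_ge: "w \<mu> * cylp \<mu> x \<le> mixp M w x"
proof -
  have "infsum (\<lambda>\<nu>. w \<nu> * cylp \<nu> x) {\<mu>} \<le> infsum (\<lambda>\<nu>. w \<nu> * cylp \<nu> x) M"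
    using mu wc_nn summ by (intro infsum_mono_neutral) auto
  then show ?thesis by (simp add: mixp_def)
qed

lemma mix_enn: "ennreal (mixp M w x) = (\<integral>\<^sup>+\<nu>. ennreal (w \<nu>) * emeasure \<nu> (cyl x) \<partial>count_space M)"
proof -
  have "ennreal (mixp M w x) = (\<integral>\<^sup>+\<nu>. ennreal (w \<nu> * cylp \<nu> x) \<partial>count_space M)"
    unfolding mixp_def using wc_nn summ by (intro nn_count_infsum[symmetric]) auto
  also have "\<dots> = (\<integral>\<^sup>+\<nu>. ennreal (w \<nu>) * emeasure \<nu> (cyl x) \<partial>count_space M)"
  proof (rule nn_integral_cong)
    fix \<nu> assume "\<nu> \<in> space (count_space M)"
    then have "\<nu> \<in> M" by simp
    then show "ennreal (w \<nu> * cylp \<nu> x) = ennreal (w \<nu>) * emeasure \<nu> (cyl x)"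
      using W[of \<nu>] finite_measure.emeasure_eq_measure[OF prob_space.finite_measure[OF P[of \<nu>]]]
      by (simp add: cylp_def ennreal_mult)
  qed
  finally show ?thesis .
qed

lemma w_enn: "(\<integral>\<^sup>+\<nu>. ennreal (w \<nu>) \<partial>count_space M) = 1"
proof -
  have "(\<integral>\<^sup>+\<nu>. ennreal (w \<nu>) \<partial>count_space M) = ennreal (infsum w M)"
    using W H by (intro nn_count_infsum) (auto intro: has_sum_imp_summable less_imp_le)
  then show ?thesis using H by (simp add: infsumI)
qed

lemma mix_sum:
  fixes g :: "'i \<Rightarrow> 'a list"
  assumes I: "countable I"
    and disj: "\<And>i j. i \<in> I \<Longrightarrow> j \<in> I \<Longrightarrow> i \<noteq> j \<Longrightarrow> cyl (g i) \<inter> cyl (g j) = {}"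
    and sub: "\<And>i. i \<in> I \<Longrightarrow> cyl (g i) \<subseteq> C" and C: "C \<in> sets (stream_space (count_space UNIV))"
  shows "(\<integral>\<^sup>+i. ennreal (mixp M w (g i)) \<partial>count_space I) \<le> (\<integral>\<^sup>+\<nu>. ennreal (w \<nu>) * emeasure \<nu> C \<partial>count_space M)"
proof -
  have "(\<integral>\<^sup>+i. ennreal (mixp M w (g i)) \<partial>count_space I)
      = (\<integral>\<^sup>+i. (\<integral>\<^sup>+\<nu>. ennreal (w \<nu>) * emeasure \<nu> (cyl (g i)) \<partial>count_space M) \<partial>count_space I)"
    by (simp add: mix_enn)
  also have "\<dots> = (\<integral>\<^sup>+\<nu>. (\<integral>\<^sup>+i. ennreal (w \<nu>) * emeasure \<nu> (cyl (g i)) \<partial>count_space I) \<partial>count_space M)"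
    by (rule nn_integral_count_space_nn_integral) (auto simp: cM)
  also have "\<dots> = (\<integral>\<^sup>+\<nu>. ennreal (w \<nu>) * (\<integral>\<^sup>+i. emeasure \<nu> (cyl (g i)) \<partial>count_space I) \<partial>count_space M)"
    by (simp add: nn_integral_cmult)
  also have "\<dots> \<le> (\<integral>\<^sup>+\<nu>. ennreal (w \<nu>) * emeasure \<nu> C \<partial>count_space M)"
  proof (rule nn_integral_mono)
    fix \<nu> assume "\<nu> \<in> space (count_space M)"
    then have "\<nu> \<in> M" by simp
    then show "ennreal (w \<nu>) * (\<integral>\<^sup>+i. emeasure \<nu> (cyl (g i)) \<partial>count_space I) \<le> ennreal (w \<nu>) * emeasure \<nu> C"
      using sum_cyl_le'[OF S I disj sub] C S by (intro mult_left_mono) auto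
  qed
  finally show ?thesis .
qed

end



context bay begin

lemma space_nu: "\<nu> \<in> M \<Longrightarrow> space \<nu> = UNIV"
  using sets_eq_imp_space_eq[OF S] by (simp add: space_ss)

lemma ss_UNIV: "UNIV \<in> sets (stream_space (count_space (UNIV::'a set)))"
  using sets.top[of "stream_space (count_space (UNIV::'a set))"] by (simp add: space_ss)

lemma mix_total: "(\<integral>\<^sup>+x. ennreal (mixp M w x) \<partial>count_space {x. length x = k}) \<le> 1"
proof -
  have "(\<integral>\<^sup>+x. ennreal (mixp M w (id x)) \<partial>count_space {x. length x = k})
     \<le> (\<integral>\<^sup>+\<nu>. ennreal (w \<nu>) * emeasure \<nu> UNIV \<partial>count_space M)"
  proof (rule mix_sum)
    show "countable {x::'a list. length x = k}" by (rule countable_subset[OF subset_UNIV]) simp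
    show "cyl (id i) \<inter> cyl (id j) = {}" if "i \<in> {x. length x = k}" "j \<in> {x. length x = k}" "i \<noteq> j" for i j
      using that by (intro cyl_disj) auto
  qed (auto simp: ss_UNIV)
  also have "\<dots> \<le> (\<integral>\<^sup>+\<nu>. ennreal (w \<nu>) \<partial>count_space M)"
  proof (rule nn_integral_mono)
    fix \<nu> assume "\<nu> \<in> space (count_space M)"
    then have "\<nu> \<in> M" by simp
    then have "emeasure \<nu> UNIV = 1"
      using prob_space.emeasure_space_1[OF P] space_nu by metis
    then show "ennreal (w \<nu>) * emeasure \<nu> UNIV \<le> ennreal (w \<nu>)" by simp
  qed
  finally show ?thesis using w_enn by simp
qed

lemma mix_children: "(\<integral>\<^sup>+a. ennreal (mixp M w (x @ [a])) \<partial>count_space UNIV) \<le> ennreal (mixp M w x)"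
proof -
  have "(\<integral>\<^sup>+a. ennreal (mixp M w (x @ [a])) \<partial>count_space UNIV)
     \<le> (\<integral>\<^sup>+\<nu>. ennreal (w \<nu>) * emeasure \<nu> (cyl x) \<partial>count_space M)"
  proof (rule mix_sum)
    show "cyl (x @ [i]) \<inter> cyl (x @ [j]) = {}" if "i \<noteq> j" for i j
      using that by (intro cyl_disj) auto
  qed (auto simp: cyl_snoc cyl_sets[OF refl])
  then show ?thesis by (simp add: mix_enn)
qed

lemma mu_children: "(\<integral>\<^sup>+a. ennreal (cylp \<mu> (x @ [a])) \<partial>count_space UNIV) \<le> ennreal (cylp \<mu> x)"
proof -
  have e: "ennreal (cylp \<mu> y) = emeasure \<mu> (cyl y)" for y
    using finite_measure.emeasure_eq_measure[OF prob_space.finite_measure[OF P[OF mu]]]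
    by (simp add: cylp_def)
  have "(\<integral>\<^sup>+a. emeasure \<mu> (cyl (x @ [a])) \<partial>count_space UNIV) \<le> emeasure \<mu> (cyl x)"
  proof (rule sum_cyl_le'[OF S[OF mu]])
    show "cyl (x @ [i]) \<inter> cyl (x @ [j]) = {}" if "i \<noteq> j" for i j
      using that by (intro cyl_disj) auto
  qed (auto simp: cyl_snoc cyl_sets[OF S[OF mu]])
  then show ?thesis by (simp add: e)
qed

lemma mu_total: "(\<integral>\<^sup>+x. emeasure \<mu> (cyl x) \<partial>count_space {x. length x = k}) \<le> 1"
proof -
  have "(\<integral>\<^sup>+x. emeasure \<mu> (cyl (id x)) \<partial>count_space {x. length x = k}) \<le> emeasure \<mu> UNIV"
  proof (rule sum_cyl_le'[OF S[OF mu]])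
    show "countable {x::'a list. length x = k}" by (rule countable_subset[OF subset_UNIV]) simp
    show "cyl (id i) \<inter> cyl (id j) = {}" if "i \<in> {x. length x = k}" "j \<in> {x. length x = k}" "i \<noteq> j" for i j
      using that by (intro cyl_disj) auto
  qed (auto simp: S[OF mu] ss_UNIV)
  moreover have "emeasure \<mu> UNIV = 1"
    using prob_space.emeasure_space_1[OF P[OF mu]] space_nu[OF mu] by metis
  ultimately show ?thesis by simp
qed

definition "L = - ln (w \<mu>)"

lemma w0: "0 < w \<mu>" "w \<mu> \<le> 1" using W[OF mu] by auto

lemma L_nn: "0 \<le> L" unfolding L_def using w0 by simp

lemma R1: "\<bar>ln (cylp \<mu> x / mixp M w x)\<bar> * cylp \<mu> x \<le> (L + 1) * cylp \<mu> x + mixp M w x"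
proof (cases "cylp \<mu> x = 0")
  case True then show ?thesis using mix_nn by simp
next
  case False
  then have p: "0 < cylp \<mu> x" using cylp_bounds[OF mu] by (simp add: less_le)
  have ge: "w \<mu> * cylp \<mu> x \<le> mixp M w x" by (rule mix_ge)
  have s: "0 < mixp M w x" using ge p w0 by (smt (verit) mult_pos_pos)
  have "\<bar>cylp \<mu> x * ln ((cylp \<mu> x / mixp M w x) * 1)\<bar> \<le> cylp \<mu> x * (- ln (w \<mu>) + 1) + mixp M w x / 1"
    by (rule core[OF p s _ w0(1) _ w0(2)]) (use ge in \<open>auto simp: mult.commute\<close>)
  then show ?thesis using p by (simp add: L_def abs_mult algebra_simps)
qed

end



context bay begin

definition "innr x = (\<Sum>\<^sub>\<infinity>a\<in>UNIV. condp (cylp \<mu>) a x * ln (condp (cylp \<mu>) a x / condp (mixp M w) a x))"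

lemma emu: "emeasure \<mu> (cyl y) = ennreal (cylp \<mu> y)"
  using finite_measure.emeasure_eq_measure[OF prob_space.finite_measure[OF P[OF mu]]]
  by (simp add: cylp_def)

lemma R2: "\<bar>innr x\<bar> * cylp \<mu> x \<le> (L + 1) * cylp \<mu> x + mixp M w x"
proof (cases "cylp \<mu> x = 0")
  case True then show ?thesis using mix_nn by simp
next
  case False
  define p where "p = cylp \<mu> x"
  define s where "s = mixp M w x"
  define pa where "pa a = cylp \<mu> (x @ [a])" for a
  define sa where "sa a = mixp M w (x @ [a])" for a
  define t where "t a = condp (cylp \<mu>) a x * ln (condp (cylp \<mu>) a x / condp (mixp M w) a x)" for a
  define g where "g a = p * t a" for a
  define B where "B = (L + 1) * p + s"
  have p: "0 < p" using False cylp_bounds[OF mu] by (simp add: p_def less_le)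
  have ge: "w \<mu> * p \<le> s" unfolding p_def s_def by (rule mix_ge)
  have s: "0 < s" using ge p w0 by (smt (verit) mult_pos_pos)
  have pa_nn: "0 \<le> pa a" for a using cylp_bounds[OF mu] by (simp add: pa_def)
  have sa_nn: "0 \<le> sa a" for a using mix_nn by (simp add: sa_def)
  have gb: "\<bar>g a\<bar> \<le> (L + s / p) * pa a + (p / s) * sa a" for a
  proof (cases "pa a = 0")
    case True
    then have "g a = 0" by (simp add: g_def t_def condp_def pa_def)
    then show ?thesis using L_nn p s pa_nn sa_nn by simp
  next
    case False
    then have pa: "0 < pa a" using pa_nn[of a] by simp
    have gea: "w \<mu> * pa a \<le> sa a" unfolding pa_def sa_def by (rule mix_ge)
    have sa: "0 < sa a" using gea pa w0 by (smt (verit) mult_pos_pos)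
    have c: "\<bar>pa a * ln ((pa a / sa a) * (s / p))\<bar> \<le> pa a * (- ln (w \<mu>) + s / p) + sa a / (s / p)"
      by (rule core[OF pa sa _ w0(1) _ w0(2)]) (use gea p s in \<open>auto simp: mult.commute\<close>)
    have "g a = pa a * ln ((pa a / sa a) * (s / p))"
    proof -
      have E: "(pa a / p) / (sa a / s) = (pa a / sa a) * (s / p)" using p s sa by (simp add: field_simps)
      have "g a = p * ((pa a / p) * ln ((pa a / p) / (sa a / s)))"
        unfolding g_def t_def condp_def pa_def sa_def p_def s_def by (rule refl)
      also have "\<dots> = pa a * ln ((pa a / sa a) * (s / p))"
        using p by (simp only: E) simp
      finally show ?thesis .
    qed
    moreover have "sa a / (s / p) = (p / s) * sa a" using p s by (simp add: field_simps)
    ultimately show ?thesis using c by (simp add: L_def algebra_simps)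
  qed
  have int_le: "(\<integral>\<^sup>+a. ennreal (norm (g a)) \<partial>count_space UNIV) \<le> ennreal B"
  proof -
    have "(\<integral>\<^sup>+a. ennreal (norm (g a)) \<partial>count_space UNIV)
        \<le> (\<integral>\<^sup>+a. ennreal (L + s / p) * ennreal (pa a) + ennreal (p / s) * ennreal (sa a) \<partial>count_space UNIV)"
    proof (rule nn_integral_mono)
      fix a
      have "ennreal (norm (g a)) \<le> ennreal ((L + s / p) * pa a + (p / s) * sa a)"
        using gb[of a] by (intro ennreal_leI) simp
      also have "\<dots> = ennreal (L + s / p) * ennreal (pa a) + ennreal (p / s) * ennreal (sa a)"
      proof -
        have n1: "0 \<le> L + s / p" and n2: "0 \<le> p / s" using L_nn p s by simp_all
        have m1: "0 \<le> (L + s / p) * pa a" by (intro mult_nonneg_nonneg n1 pa_nn)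
        have m2: "0 \<le> (p / s) * sa a" by (intro mult_nonneg_nonneg n2 sa_nn)
        show ?thesis by (simp only: ennreal_plus[OF m1 m2] ennreal_mult[OF n1 pa_nn] ennreal_mult[OF n2 sa_nn])
      qed
      finally show "ennreal (norm (g a)) \<le> ennreal (L + s / p) * ennreal (pa a) + ennreal (p / s) * ennreal (sa a)" .
    qed
    also have "\<dots> = ennreal (L + s / p) * (\<integral>\<^sup>+a. ennreal (pa a) \<partial>count_space UNIV)
                   + ennreal (p / s) * (\<integral>\<^sup>+a. ennreal (sa a) \<partial>count_space UNIV)"
      by (simp add: nn_integral_add nn_integral_cmult)
    also have "\<dots> \<le> ennreal (L + s / p) * ennreal p + ennreal (p / s) * ennreal s"
      using mu_children[of x] mix_children[of x]
      by (intro add_mono mult_left_mono) (auto simp: pa_def sa_def p_def s_def)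
    also have "\<dots> = ennreal B"
    proof -
      have n1: "0 \<le> L + s / p" and n2: "0 \<le> p / s" using L_nn p s by simp_all
      have m1: "0 \<le> (L + s / p) * p" using n1 p by simp
      have m2: "0 \<le> (p / s) * s" using p s by simp
      have "ennreal (L + s / p) * ennreal p + ennreal (p / s) * ennreal s = ennreal ((L + s / p) * p + (p / s) * s)"
        by (simp only: ennreal_plus[OF m1 m2] ennreal_mult[OF n1 less_imp_le[OF p]] ennreal_mult[OF n2 less_imp_le[OF s]])
      also have "(L + s / p) * p + (p / s) * s = B" using p s by (simp add: B_def field_simps)
      finally show ?thesis .
    qed
    finally show ?thesis .
  qed
  have ig: "integrable (count_space UNIV) g"
    by (rule integrableI_bounded) (use int_le in \<open>auto simp: top.not_eq_extremum intro: le_less_trans\<close>)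
  have "infsum g UNIV = p * innr x"
    unfolding g_def innr_def t_def by (rule infsum_cmult_right')
  moreover have "infsum g UNIV = integral\<^sup>L (count_space UNIV) g"
    using infsetsum_infsum[of g UNIV] ig by (simp add: abs_summable_on_def infsetsum_def)
  moreover have "ennreal (norm (integral\<^sup>L (count_space UNIV) g)) \<le> ennreal B"
    using integral_norm_bound_ennreal[OF ig] int_le by (rule order.trans)
  moreover have B0: "0 \<le> B" using L_nn p s by (simp add: B_def)
  ultimately have "\<bar>p * innr x\<bar> \<le> B"
    by (metis ennreal_le_iff real_norm_def)
  then show ?thesis using p by (simp add: B_def p_def s_def abs_mult mult.commute)
qed

lemma integ:
  fixes F :: "'a list \<Rightarrow> real"
  assumes bnd: "\<And>x. \<bar>F x\<bar> * cylp \<mu> x \<le> (L + 1) * cylp \<mu> x + mixp M w x"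
  shows "integrable \<mu> (\<lambda>\<omega>. F (stake k \<omega>))"
proof (rule integrableI_bounded)
  show "(\<lambda>\<omega>. F (stake k \<omega>)) \<in> borel_measurable \<mu>"
  proof -
    have "F \<in> borel_measurable (count_space UNIV)" by simp
    then have "(\<lambda>\<omega>. F (stake k \<omega>)) \<in> borel_measurable (stream_space (count_space UNIV))"
      by (rule measurable_compose[OF measurable_stake])
    then show ?thesis by (simp only: measurable_cong_sets[OF S[OF mu] refl])
  qed
  have "(\<integral>\<^sup>+\<omega>. ennreal (norm (F (stake k \<omega>))) \<partial>\<mu>)
      = (\<integral>\<^sup>+x. ennreal \<bar>F x\<bar> * emeasure \<mu> (cyl x) \<partial>count_space {x. length x = k})"
    using nn_prefix[OF S[OF mu], of "\<lambda>x. ennreal \<bar>F x\<bar>" k] by simp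
  also have "\<dots> \<le> (\<integral>\<^sup>+x. ennreal (L + 1) * emeasure \<mu> (cyl x) + ennreal (mixp M w x) \<partial>count_space {x. length x = k})"
  proof (rule nn_integral_mono)
    fix x
    have "ennreal \<bar>F x\<bar> * emeasure \<mu> (cyl x) = ennreal (\<bar>F x\<bar> * cylp \<mu> x)"
      using cylp_bounds[OF mu] by (simp add: emu ennreal_mult)
    also have "\<dots> \<le> ennreal ((L + 1) * cylp \<mu> x + mixp M w x)" using bnd by (rule ennreal_leI)
    also have "\<dots> = ennreal (L + 1) * emeasure \<mu> (cyl x) + ennreal (mixp M w x)"
    proof -
      have m1: "0 \<le> (L + 1) * cylp \<mu> x" using cylp_bounds[OF mu] L_nn by simp
      have "ennreal ((L + 1) * cylp \<mu> x + mixp M w x) = ennreal ((L + 1) * cylp \<mu> x) + ennreal (mixp M w x)"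
        by (rule ennreal_plus[OF m1 mix_nn])
      also have "\<dots> = ennreal (L + 1) * emeasure \<mu> (cyl x) + ennreal (mixp M w x)"
        using cylp_bounds[OF mu] L_nn by (simp add: emu ennreal_mult)
      finally show ?thesis .
    qed
    finally show "ennreal \<bar>F x\<bar> * emeasure \<mu> (cyl x) \<le> ennreal (L + 1) * emeasure \<mu> (cyl x) + ennreal (mixp M w x)" .
  qed
  also have "\<dots> = ennreal (L + 1) * (\<integral>\<^sup>+x. emeasure \<mu> (cyl x) \<partial>count_space {x. length x = k})
                 + (\<integral>\<^sup>+x. ennreal (mixp M w x) \<partial>count_space {x. length x = k})"
    by (simp add: nn_integral_add nn_integral_cmult)
  also have "\<dots> \<le> ennreal (L + 1) * 1 + 1"
    using mu_total[of k] mix_total[of k] by (intro add_mono mult_left_mono) auto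
  also have "\<dots> < \<infinity>" by (simp add: ennreal_plus[symmetric] del: ennreal_plus)
  finally show "(\<integral>\<^sup>+\<omega>. ennreal (norm (F (stake k \<omega>))) \<partial>\<mu>) < \<infinity>" .
qed

end

theorem lemma4:
  fixes M :: "('a::countable) stream measure set"
    and w :: "'a stream measure \<Rightarrow> real"
    and \<mu> :: "'a stream measure"
    and n :: nat
  assumes "countable M"
    and "\<And>\<nu>. \<nu> \<in> M \<Longrightarrow> prob_space \<nu>"
    and "\<And>\<nu>. \<nu> \<in> M \<Longrightarrow> sets \<nu> = sets (stream_space (count_space UNIV))"
    and "\<And>\<nu>. \<nu> \<in> M \<Longrightarrow> 0 < w \<nu> \<and> w \<nu> \<le> 1"
    and "(w has_sum 1) M"
    and "\<mu> \<in> M"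
  shows "integrable \<mu> (\<lambda>\<omega>. ln (cylp \<mu> (prefix_lt n \<omega>) / mixp M w (prefix_lt n \<omega>)))
       \<and> integrable \<mu> (\<lambda>\<omega>. dn \<mu> M w n \<omega>)"
proof -
  interpret bay M w \<mu> by (rule bay.intro) (fact assms)+
  have 1: "integrable \<mu> (\<lambda>\<omega>. (\<lambda>x. ln (cylp \<mu> x / mixp M w x)) (stake (n - 1) \<omega>))"
    by (rule integ) (rule R1)
  have 2: "integrable \<mu> (\<lambda>\<omega>. innr (stake (n - 1) \<omega>))"
    by (rule integ) (rule R2)
  show ?thesis using 1 2 by (simp add: prefix_lt_def dn_def innr_def)
qed


end
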